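(* Let $f:(0,\infty)\to\mathbb{R}$ be convex, strictly convex and thrice differentiable at $1$, with $f(1)=0$ and $f''(1)>0$, such that for every $t\in(0,\infty)$, $$\bigl(f(t)-f'(1)(t-1)\bigr)\left(1-\frac{f'''(1)}{3f''(1)}(t-1)\right)\ge \frac{f''(1)}{2}(t-1)^2 .$$ Let $\mathcal{X}$ be a finite set, $P_X$ a pmf on $\mathcal{X}$ with $P_X(x)>0$ for all $x$, and $R_X\neq P_X$ a pmf on $\mathcal{X}$. Write $J_X=R_X-P_X$ and $K_X(x)=J_X(x)/\sqrt{P_X(x)}$. Then $$D_f(R_X\|P_X)\ge \frac{f''(1)}{2}\,\frac{\|K_X\|_2^2\,\|J_X\|_1}{\max_{x\in\mathcal{X}}\left|\frac{J_X(x)}{P_X(x)}\right|}.$$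
   Context: Strict convexity at $1$ means $\lambda f(x)+(1-\lambda)f(y)>f(1)$ whenever $\lambda\in(0,1)$, $x,y>0$, $\lambda x+(1-\lambda)y=1$. The $f$-divergence is $D_f(R_X\|P_X)=\sum_x P_X(x)f(R_X(x)/P_X(x))$, with the convention $f(0)=\lim_{t\to0^+}f(t)$. $\|\cdot\|_p$ denotes the $\ell^p$-norm. *)

theory Defs
  imports "HOL-Analysis.Analysis" "HOL-Library.Extended_Real"
begin

definition strictly_convex_at_one :: "(real \<Rightarrow> real) \<Rightarrow> bool" where
  "strictly_convex_at_one f \<longleftrightarrow>
     (\<forall>l x y. 0 < l \<and> l < 1 \<and> 0 < x \<and> 0 < y \<and> x \<noteq> y \<and> l * x + (1 - l) * y = 1
        \<longrightarrow> l * f x + (1 - l) * f y > f 1)"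

text \<open>The convention f(0) = lim_{t -> 0+} f(t), taken in the extended reals
  (for convex f the limit exists in (-inf, +inf], and then equals the liminf).\<close>
definition f_at_zero :: "(real \<Rightarrow> real) \<Rightarrow> ereal" where
  "f_at_zero f = Liminf (at_right 0) (\<lambda>t. ereal (f t))"

definition f_div :: "(real \<Rightarrow> real) \<Rightarrow> ('a::finite \<Rightarrow> real) \<Rightarrow> ('a \<Rightarrow> real) \<Rightarrow> ereal" where
  "f_div f R P = (\<Sum>x\<in>UNIV. if R x = 0 then ereal (P x) * f_at_zero f
                              else ereal (P x * f (R x / P x)))"

end

theory Submission
  imports Defs
begin

theorem lemma5:
  fixes f f1 f2 :: "real \<Rightarrow> real" and f3 e :: real
    and P R :: "'a::finite \<Rightarrow> real"
  assumes convex: "convex_on {0<..} f"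
    and strict: "strictly_convex_at_one f"
    and e_pos: "e > 0"
    and d1: "\<forall>x\<in>ball 1 e. (f has_real_derivative f1 x) (at x)"
    and d2: "\<forall>x\<in>ball 1 e. (f1 has_real_derivative f2 x) (at x)"
    and d3: "(f2 has_real_derivative f3) (at 1)"
    and f1_zero: "f 1 = 0"
    and f2_pos: "f2 1 > 0"
    and ineq: "\<forall>t>0. (f t - f1 1 * (t - 1)) * (1 - f3 / (3 * f2 1) * (t - 1))
                        \<ge> f2 1 / 2 * (t - 1)^2"
    and P_pos: "\<forall>x. P x > 0" and P_sum: "(\<Sum>x\<in>UNIV. P x) = 1"
    and R_nonneg: "\<forall>x. R x \<ge> 0" and R_sum: "(\<Sum>x\<in>UNIV. R x) = 1"
    and R_ne_P: "R \<noteq> P"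
  shows "f_div f R P \<ge>
    ereal (f2 1 / 2 *
      ((\<Sum>x\<in>UNIV. ((R x - P x) / sqrt (P x))^2) * (\<Sum>x\<in>UNIV. \<bar>R x - P x\<bar>))
      / (MAX x\<in>UNIV. \<bar>(R x - P x) / P x\<bar>))"
proof -
  define a where "a = f2 1 / 2"
  define c where "c = f3 / (3 * f2 1)"
  define k where "k = f1 1"
  have a_pos: "a > 0" using f2_pos a_def by simp
  have ineq': "\<And>t. t > 0 \<Longrightarrow> (f t - k * (t - 1)) * (1 - c * (t - 1)) \<ge> a * (t - 1)^2"
    using ineq unfolding a_def c_def k_def by auto
  have dk: "(f has_real_derivative k) (at 1)" using d1 e_pos k_def by simp
  have tang: "f t \<ge> k * (t - 1)" if "t > 0" for t
  proof -
    have "f t - f 1 \<ge> k * (t - 1)"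
      by (rule convex_on_imp_above_tangent[OF convex])
         (use that dk in \<open>auto intro: has_field_derivative_at_within simp: interior_open\<close>)
    thus ?thesis using f1_zero by simp
  qed
  have key: "1 - c * (t - 1) > 0 \<and> f t \<ge> k * (t - 1) + a * (t - 1)^2 / (1 - c * (t - 1))"
    if "t > 0" "t \<noteq> 1" for t
  proof -
    have g: "f t - k * (t - 1) \<ge> 0" using tang[OF that(1)] by simp
    have "a * (t - 1)^2 > 0" using a_pos that(2) by simp
    hence pr: "(f t - k * (t - 1)) * (1 - c * (t - 1)) > 0" using ineq'[OF that(1)] by linarith
    hence dpos: "1 - c * (t - 1) > 0" using g
      by (metis less_eq_real_def mult_nonneg_nonpos not_less)
    have "a * (t - 1)^2 / (1 - c * (t - 1)) \<le> f t - k * (t - 1)"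
      using ineq'[OF that(1)] dpos by (simp add: pos_divide_le_eq)
    thus ?thesis using dpos by simp
  qed
  have c_ge: "1 + c \<ge> 0"
  proof (rule ccontr)
    assume "\<not> 1 + c \<ge> 0"
    hence cn: "c < -1" by simp
    define t where "t = (1 + c) / (2 * c)"
    have t0: "t > 0" unfolding t_def using cn by (simp add: divide_neg_neg)
    have t1: "t < 1" unfolding t_def using cn by (simp add: divide_less_eq)
    have "1 - c * (t - 1) = (1 + c) / 2" unfolding t_def using cn by (simp add: field_simps)
    hence "1 - c * (t - 1) < 0" using cn by simp
    thus False using key[OF t0] t1 by simp
  qed

  define b where "b = (\<lambda>t::real. k * (t - 1) + a * (t - 1)^2 / (1 - c * (t - 1)))"
  have zero_fin: "f_at_zero f \<ge> ereal (b 0)" if cp: "1 + c > 0"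
  proof -
    have "((\<lambda>t. b t) \<longlongrightarrow> b 0) (at_right 0)"
      unfolding b_def using cp by (intro tendsto_intros) auto
    have ev: "eventually (\<lambda>t. r < f t) (at_right 0)" if "r < b 0" for r
    proof -
      have e1: "eventually (\<lambda>t. r < b t) (at_right (0::real))"
        using order_tendstoD(1)[OF \<open>((\<lambda>t. b t) \<longlongrightarrow> b 0) (at_right 0)\<close> that] .
      have e2: "eventually (\<lambda>t::real. 0 < t \<and> t < 1) (at_right 0)"
        unfolding eventually_at_right_field by (intro exI[of _ 1]) auto
      show ?thesis using e1 e2
      proof eventually_elim
        case (elim t)
        thus ?case using key[of t] unfolding b_def by auto
      qed
    qed
    show ?thesis unfolding f_at_zero_def le_Liminf_iff
    proof (intro allI impI)
      fix y :: ereal assume y: "y < ereal (b 0)"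
      show "eventually (\<lambda>x. y < ereal (f x)) (at_right 0)"
      proof (cases y)
        case (real r)
        thus ?thesis using ev[of r] y by simp
      next
        case PInf thus ?thesis using y by simp
      next
        case MInf thus ?thesis by simp
      qed
    qed
  qed
  have zero_inf: "f_at_zero f = \<infinity>" if cm: "1 + c = 0"
  proof -
    have ev: "eventually (\<lambda>t. r < f t) (at_right 0)" for r
    proof -
      define \<delta> where "\<delta> = min (1/2) (a / (4 * (\<bar>r\<bar> + \<bar>k\<bar> + 1)))"
      have dpos: "\<delta> > 0" unfolding \<delta>_def using a_pos by (simp add: add_pos_nonneg)
      show ?thesis unfolding eventually_at_right_field
      proof (intro exI[of _ \<delta>] conjI allI impI)
        fix t :: real assume t0: "t > 0" and td: "t < \<delta>"
        have th: "t < 1/2" and ta: "t < a / (4 * (\<bar>r\<bar> + \<bar>k\<bar> + 1))" using td unfolding \<delta>_def by auto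
        have ft: "f t \<ge> k * (t - 1) + a * (t - 1)^2 / t"
        proof -
          have "c = -1" using cm by simp
          hence "1 - c * (t - 1) = t" by simp
          thus ?thesis using key[OF t0] th by simp
        qed
        have "a > 4 * t * (\<bar>r\<bar> + \<bar>k\<bar> + 1)"
        proof -
          have "0 < 4 * (\<bar>r\<bar> + \<bar>k\<bar> + 1)" by (simp add: add_pos_nonneg)
          hence "t * (4 * (\<bar>r\<bar> + \<bar>k\<bar> + 1)) < a" using ta by (simp add: pos_less_divide_eq)
          thus ?thesis by (simp only: mult_ac)
        qed
        hence "a / (4 * t) > \<bar>r\<bar> + \<bar>k\<bar> + 1" using t0 by (simp add: pos_less_divide_eq mult.commute mult.left_commute)
        moreover have "(t - 1)^2 \<ge> 1/4"
        proof -
          have "1 - t \<ge> 1/2" using th by simp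
          hence "(1/2)^2 \<le> (1 - t)^2" by (intro power_mono) auto
          moreover have "(1-t)^2 = (t-1)^2" by (simp add: power2_commute)
          moreover have "(1/2::real)^2 = 1/4" by (simp add: power2_eq_square)
          ultimately show ?thesis by linarith
        qed
        hence "a * (t - 1)^2 / t \<ge> a * (1/4) / t"
          using a_pos t0 by (intro divide_right_mono mult_left_mono) auto
        moreover have "k * (t - 1) \<ge> - \<bar>k\<bar>"
        proof -
          have "\<bar>k * (t - 1)\<bar> \<le> \<bar>k\<bar>" using t0 th by (simp add: abs_mult mult_left_le)
          thus ?thesis by linarith
        qed
        ultimately show "r < f t" using ft by (simp add: field_simps)
      qed (fact dpos)
    qed
    have "\<infinity> \<le> Liminf (at_right 0) (\<lambda>t. ereal (f t))"
      unfolding le_Liminf_iff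
    proof (intro allI impI)
      fix y :: ereal assume y: "y < \<infinity>"
      show "eventually (\<lambda>x. y < ereal (f x)) (at_right 0)"
      proof (cases y)
        case (real r)
        thus ?thesis using ev[of r] by simp
      next
        case PInf thus ?thesis using y by simp
      next
        case MInf thus ?thesis by simp
      qed
    qed
    thus ?thesis unfolding f_at_zero_def by (simp add: top_unique)
  qed
  define u where "u x = (R x - P x) / P x" for x
  define d where "d x = 1 - c * u x" for x
  define L where "L = (\<Sum>x\<in>UNIV. P x * \<bar>u x\<bar>)"
  define W where "W = (\<Sum>x\<in>UNIV. P x * (u x)^2)"
  define M where "M = (MAX x\<in>UNIV. \<bar>(R x - P x) / P x\<bar>)"
  define S where "S = (\<Sum>x\<in>UNIV. P x * (u x)^2 / d x)"
  have Pne: "P x \<noteq> 0" for x using P_pos by (metis less_irrefl)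
  have Pu: "P x * u x = R x - P x" for x using Pne[of x] by (simp add: u_def)
  have u_t: "u x = R x / P x - 1" for x using Pne[of x] by (simp add: u_def field_simps)
  have sumPu: "(\<Sum>x\<in>UNIV. P x * u x) = 0" using R_sum P_sum by (simp add: Pu sum_subtractf)
  have W_eq: "(\<Sum>x\<in>UNIV. ((R x - P x) / sqrt (P x))^2) = W"
    unfolding W_def
  proof (rule sum.cong)
    fix x :: 'a
    have "P x \<ge> 0" using P_pos by (simp add: less_imp_le)
    thus "((R x - P x) / sqrt (P x))^2 = P x * (u x)^2"
      using Pne[of x] by (simp add: u_def power_divide power2_eq_square)
  qed simp
  have L_eq: "(\<Sum>x\<in>UNIV. \<bar>R x - P x\<bar>) = L"
    unfolding L_def
  proof (rule sum.cong)
    fix x :: 'a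
    have "\<bar>P x\<bar> = P x" using P_pos by (simp add: less_imp_le)
    hence "P x * \<bar>u x\<bar> = \<bar>P x * u x\<bar>" by (simp add: abs_mult)
    thus "\<bar>R x - P x\<bar> = P x * \<bar>u x\<bar>" by (simp add: Pu)
  qed simp
  have goal_eq: "f2 1 / 2 *
      ((\<Sum>x\<in>UNIV. ((R x - P x) / sqrt (P x))^2) * (\<Sum>x\<in>UNIV. \<bar>R x - P x\<bar>))
      / (MAX x\<in>UNIV. \<bar>(R x - P x) / P x\<bar>) = a * (W * L) / M"
    by (simp add: W_eq L_eq a_def M_def)
  show ?thesis
  proof (cases "(\<exists>x. R x = 0) \<and> 1 + c = 0")
    case True
    then obtain x0 where x0: "R x0 = 0" and cm: "1 + c = 0" by auto
    have "f_div f R P = \<infinity>" unfolding f_div_def sum_Pinfty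
      using P_pos zero_inf[OF cm] x0 Pne by (auto intro!: exI[of _ x0])
    thus ?thesis by simp
  next
    case False
    have dpos: "d x > 0" for x
    proof (cases "R x = 0")
      case True
      hence "1 + c \<noteq> 0" using False by auto
      hence "1 + c > 0" using c_ge by simp
      moreover have "u x = -1" using True Pne[of x] by (simp add: u_def)
      ultimately show ?thesis by (simp add: d_def)
    next
      case Rn: False
      have t0: "R x / P x > 0" using Rn R_nonneg P_pos
        by (metis divide_pos_pos less_eq_real_def)
      show ?thesis
      proof (cases "R x / P x = 1")
        case True thus ?thesis by (simp add: d_def u_t)
      next
        case False thus ?thesis using key[OF t0 False] by (simp add: d_def u_t)
      qed
    qed
    have tm: "(if R x = 0 then ereal (P x) * f_at_zero f else ereal (P x * f (R x / P x)))
        \<ge> ereal (P x * (k * u x + a * (u x)^2 / d x))" for x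
    proof (cases "R x = 0")
      case True
      hence "1 + c \<noteq> 0" using False by auto
      hence cp: "1 + c > 0" using c_ge by simp
      have ux: "u x = -1" using True Pne[of x] by (simp add: u_def)
      have "b 0 = k * u x + a * (u x)^2 / d x" by (simp add: b_def ux d_def)
      hence "ereal (P x) * f_at_zero f \<ge> ereal (P x) * ereal (k * u x + a * (u x)^2 / d x)"
        using zero_fin[OF cp] P_pos by (intro ereal_mult_left_mono) (auto simp: less_imp_le)
      thus ?thesis using True by simp
    next
      case Rn: False
      have t0: "R x / P x > 0" using Rn R_nonneg P_pos
        by (metis divide_pos_pos less_eq_real_def)
      have "f (R x / P x) \<ge> k * u x + a * (u x)^2 / d x"
      proof (cases "R x / P x = 1")
        case True thus ?thesis by (simp add: d_def u_t f1_zero)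
      next
        case False thus ?thesis using key[OF t0 False] by (simp add: d_def u_t)
      qed
      hence "P x * f (R x / P x) \<ge> P x * (k * u x + a * (u x)^2 / d x)"
        using P_pos by (intro mult_left_mono) (auto simp: less_imp_le)
      thus ?thesis using Rn by simp
    qed
    have lb: "f_div f R P \<ge> ereal (\<Sum>x\<in>UNIV. P x * (k * u x + a * (u x)^2 / d x))"
      unfolding f_div_def sum_ereal[symmetric] by (rule sum_mono) (rule tm)
    have sum_eq: "(\<Sum>x\<in>UNIV. P x * (k * u x + a * (u x)^2 / d x)) = a * S"
    proof -
      have "(\<Sum>x\<in>UNIV. P x * (k * u x + a * (u x)^2 / d x))
          = (\<Sum>x\<in>UNIV. k * (P x * u x) + a * (P x * (u x)^2 / d x))"
        by (rule sum.cong) (auto simp: algebra_simps)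
      also have "\<dots> = k * (\<Sum>x\<in>UNIV. P x * u x) + a * S"
        by (simp add: sum.distrib sum_distrib_left S_def)
      finally show ?thesis using sumPu by simp
    qed
    have sumPd: "(\<Sum>x\<in>UNIV. P x * d x) = 1"
    proof -
      have "(\<Sum>x\<in>UNIV. P x * d x) = (\<Sum>x\<in>UNIV. P x - c * (P x * u x))"
        by (rule sum.cong) (auto simp: d_def algebra_simps)
      also have "\<dots> = 1" using P_sum sumPu by (simp add: sum_subtractf sum_distrib_left[symmetric])
      finally show ?thesis .
    qed
    have CS: "L^2 \<le> S"
    proof -
      have pt: "P x * (\<bar>u x\<bar> - L * d x)^2 / d x
          = P x * (u x)^2 / d x - 2 * L * (P x * \<bar>u x\<bar>) + L^2 * (P x * d x)" for x
        using dpos[of x] by (simp add: field_simps power2_eq_square abs_mult_self_eq)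
      have "0 \<le> (\<Sum>x\<in>UNIV. P x * (\<bar>u x\<bar> - L * d x)^2 / d x)"
        using dpos P_pos by (intro sum_nonneg) (auto simp: less_imp_le)
      also have "\<dots> = S - 2 * L * L + L^2 * 1"
        unfolding pt sum.distrib sum_subtractf sum_distrib_left[symmetric] S_def sumPd
        by (simp add: L_def)
      finally show ?thesis by (simp add: power2_eq_square)
    qed
    have Mge: "\<bar>u x\<bar> \<le> M" for x unfolding M_def u_def by (rule Max_ge) auto
    obtain x1 where "R x1 \<noteq> P x1" using R_ne_P by auto
    hence "u x1 \<noteq> 0" using Pne[of x1] by (simp add: u_def)
    hence Mpos: "M > 0" using Mge[of x1] by linarith
    have L0: "L \<ge> 0" unfolding L_def using P_pos by (intro sum_nonneg) (auto simp: less_imp_le)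
    have WL: "W \<le> M * L"
    proof -
      have "W \<le> (\<Sum>x\<in>UNIV. M * (P x * \<bar>u x\<bar>))"
        unfolding W_def
      proof (rule sum_mono)
        fix x
        have "P x * (u x)^2 = (P x * \<bar>u x\<bar>) * \<bar>u x\<bar>" by (simp add: power2_eq_square abs_mult_self_eq)
        also have "\<dots> \<le> (P x * \<bar>u x\<bar>) * M"
          using Mge[of x] P_pos by (intro mult_left_mono) (auto simp: less_imp_le)
        finally show "P x * (u x)^2 \<le> M * (P x * \<bar>u x\<bar>)" by (simp add: mult.commute)
      qed
      thus ?thesis by (simp add: L_def sum_distrib_left)
    qed
    have "W * L \<le> (M * L) * L" using WL L0 by (intro mult_right_mono)
    hence "W * L / M \<le> L^2" using Mpos by (simp add: pos_divide_le_eq power2_eq_square mult_ac)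
    hence "W * L / M \<le> S" using CS by linarith
    hence "a * (W * L) / M \<le> a * S" using a_pos
      by (metis mult_left_mono less_imp_le times_divide_eq_right)
    thus ?thesis using lb sum_eq goal_eq by (metis ereal_less_eq(3) order_trans)
  qed
qed

end
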